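(* Let $n \geq 4$, let $A$ be an $n \times n$ real matrix with $\mathrm{Tr}(AA^t) = n$, and let $O$ be distributed according to Haar measure on $O(n,\mathbb{R})$. Then $\mathrm{Var}[p_2(AO)] \leq 2$, where $p_2(AO) = \mathrm{Tr}((AO)^2)$. *)

theory Defs
  imports "HOL-Probability.Probability"
begin

definition orthogonal_group :: "(real^'n^'n) set" where
  "orthogonal_group = {Q. orthogonal_matrix Q}"

text \<open>M is (normalised) Haar measure on O(n,R): a Borel probability measure on the
space of n x n real matrices, concentrated on O(n,R), and invariant under left and right
multiplication by orthogonal matrices. (Such a measure exists and is unique.)\<close>
definition haar_orthogonal :: "(real^'n^'n) measure \<Rightarrow> bool" where
  "haar_orthogonal M \<longleftrightarrow>
     prob_space M \<and> sets M = sets borel \<and> emeasure M orthogonal_group = 1 \<and>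
     (\<forall>Q. orthogonal_matrix Q \<longrightarrow>
        distr M borel (\<lambda>U. Q ** U) = M \<and> distr M borel (\<lambda>U. U ** Q) = M)"

definition p2 :: "real^'n^'n \<Rightarrow> real" where
  "p2 B = trace (B ** B)"

end

theory Submission
  imports Defs
begin

lemma meas_entry[measurable]: "(\<lambda>U::real^'n^'n. U$i$j) \<in> borel_measurable borel"
  by (intro borel_measurable_continuous_onI continuous_intros)

lemma cont_lmult: "continuous_on UNIV (\<lambda>U::real^'n^'n. Q ** U)"
  unfolding matrix_matrix_mult_def by (intro continuous_intros)
lemma cont_rmult: "continuous_on UNIV (\<lambda>U::real^'n^'n. U ** Q)"
  unfolding matrix_matrix_mult_def by (intro continuous_intros)

lemma orth_rows:
  assumes "orthogonal_matrix (U::real^'n^'n)"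
  shows "(\<Sum>k\<in>UNIV. U$i$k * U$j$k) = (if i = j then 1 else 0)"
proof -
  have "U ** transpose U = mat 1" using assms by (simp add: orthogonal_matrix_def)
  hence "(U ** transpose U)$i$j = mat 1 $i$j" by simp
  thus ?thesis by (simp add: matrix_matrix_mult_def transpose_def mat_def)
qed

lemma orth_cols:
  assumes "orthogonal_matrix (U::real^'n^'n)"
  shows "(\<Sum>k\<in>UNIV. U$k$i * U$k$j) = (if i = j then 1 else 0)"
proof -
  have "transpose U ** U = mat 1" using assms by (simp add: orthogonal_matrix_def)
  hence "(transpose U ** U)$i$j = mat 1 $i$j" by simp
  thus ?thesis by (simp add: matrix_matrix_mult_def transpose_def mat_def)
qed

lemma orth_entry_bound:
  assumes "orthogonal_matrix (U::real^'n^'n)"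
  shows "\<bar>U$i$j\<bar> \<le> 1"
proof -
  have "(\<Sum>k\<in>UNIV. U$i$k * U$i$k) = 1" using orth_rows[OF assms, of i i] by simp
  moreover have "U$i$j * U$i$j \<le> (\<Sum>k\<in>UNIV. U$i$k * U$i$k)"
    by (rule member_le_sum) auto
  ultimately have "\<bar>U$i$j\<bar> ^ 2 \<le> 1 ^ 2" by (simp add: power2_eq_square)
  thus ?thesis by (rule power2_le_imp_le) simp
qed

locale haar =
  fixes M :: "(real^'n^'n) measure"
  assumes H: "haar_orthogonal M"
begin

lemma prob: "prob_space M" using H by (simp add: haar_orthogonal_def)
lemma sets_M: "sets M = sets borel" using H by (simp add: haar_orthogonal_def)
lemma space_M: "space M = UNIV" using sets_eq_imp_space_eq[OF sets_M] by simp

lemma meas_M: "h \<in> borel_measurable borel \<Longrightarrow> h \<in> borel_measurable M"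
  by (subst measurable_cong_sets[OF sets_M refl])

lemma AE_orth: "AE U in M. orthogonal_matrix U"
proof -
  have e: "emeasure M orthogonal_group = 1" using H by (simp add: haar_orthogonal_def)
  hence G: "orthogonal_group \<in> sets M" using emeasure_notin_sets by fastforce
  interpret prob_space M by (rule prob)
  have "AE U in M. U \<in> orthogonal_group"
    using G e by (subst prob_space.AE_in_set_eq_1[OF prob]) (auto simp: emeasure_eq_measure)
  thus ?thesis by (simp add: orthogonal_group_def)
qed

lemma inv_left:
  assumes Q: "orthogonal_matrix Q" and h: "(h::real^'n^'n\<Rightarrow>real) \<in> borel_measurable borel"
  shows "integral\<^sup>L M (\<lambda>U. h (Q ** U)) = integral\<^sup>L M h"
proof -
  have d: "distr M borel (\<lambda>U. Q ** U) = M" using H Q by (simp add: haar_orthogonal_def)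
  have m: "(\<lambda>U. Q ** U) \<in> M \<rightarrow>\<^sub>M borel"
    using meas_M[OF borel_measurable_continuous_onI[OF cont_lmult]] .
  have "integral\<^sup>L M h = integral\<^sup>L (distr M borel (\<lambda>U. Q ** U)) h" by (simp add: d)
  also have "\<dots> = integral\<^sup>L M (\<lambda>U. h (Q ** U))" by (rule integral_distr) (use m h in auto)
  finally show ?thesis by simp
qed

lemma inv_right:
  assumes Q: "orthogonal_matrix Q" and h: "(h::real^'n^'n\<Rightarrow>real) \<in> borel_measurable borel"
  shows "integral\<^sup>L M (\<lambda>U. h (U ** Q)) = integral\<^sup>L M h"
proof -
  have d: "distr M borel (\<lambda>U. U ** Q) = M" using H Q by (simp add: haar_orthogonal_def)
  have m: "(\<lambda>U. U ** Q) \<in> M \<rightarrow>\<^sub>M borel"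
    using meas_M[OF borel_measurable_continuous_onI[OF cont_rmult]] .
  have "integral\<^sup>L M h = integral\<^sup>L (distr M borel (\<lambda>U. U ** Q)) h" by (simp add: d)
  also have "\<dots> = integral\<^sup>L M (\<lambda>U. h (U ** Q))" by (rule integral_distr) (use m h in auto)
  finally show ?thesis by simp
qed

lemma int_bound:
  assumes "h \<in> borel_measurable borel" "AE U in M. \<bar>h U\<bar> \<le> (B::real)"
  shows "integrable M h"
proof -
  interpret prob_space M by (rule prob)
  show ?thesis using assms by (intro integrable_const_bound[where B=B]) (auto intro: meas_M)
qed

lemma int4: "integrable M (\<lambda>U. U$a$b * U$c$d * U$e$f * U$g$h)"
proof (rule int_bound[where B=1])
  show "AE U in M. \<bar>U$a$b * U$c$d * U$e$f * U$g$h\<bar> \<le> 1"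
    using AE_orth
  proof eventually_elim
    case (elim U)
    note b = orth_entry_bound[OF elim]
    show ?case unfolding abs_mult
      by (intro mult_le_one b abs_ge_zero mult_nonneg_nonneg)
  qed
qed measurable

lemma int2: "integrable M (\<lambda>U. U$a$b * U$c$d)"
proof (rule int_bound[where B=1])
  show "AE U in M. \<bar>U$a$b * U$c$d\<bar> \<le> 1"
    using AE_orth
  proof eventually_elim
    case (elim U)
    note b = orth_entry_bound[OF elim]
    show ?case unfolding abs_mult
      by (intro mult_le_one b abs_ge_zero mult_nonneg_nonneg)
  qed
qed measurable

end

definition sg :: "'n \<Rightarrow> 'n \<Rightarrow> real" where "sg r i = (if i = r then -1 else 1)"

definition Dm :: "'n::finite \<Rightarrow> real^'n^'n" where
  "Dm r = (\<chi> i k. if i = k then sg r i else 0)"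

lemma Dm_left: "(Dm r ** U) $ i $ j = sg r i * U$i$j"
  by (simp add: Dm_def matrix_matrix_mult_def if_distrib[where f="\<lambda>x. x * _"] cong: if_cong)

lemma Dm_right: "(U ** Dm r) $ i $ j = sg r j * U$i$j"
  by (simp add: Dm_def matrix_matrix_mult_def if_distrib[where f="\<lambda>x. _ * x"] mult.commute cong: if_cong)

lemma Dm_orth: "orthogonal_matrix (Dm r)"
proof -
  have t: "transpose (Dm r) = Dm r" by (simp add: vec_eq_iff Dm_def transpose_def)
  have "transpose (Dm r) ** Dm r = mat 1"
    unfolding t by (simp add: vec_eq_iff Dm_left mat_def) (simp add: Dm_def sg_def)
  thus ?thesis by (simp add: orthogonal_matrix)
qed

definition Pm :: "('n::finite \<Rightarrow> 'n) \<Rightarrow> real^'n^'n" where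
  "Pm \<sigma> = (\<chi> i k. if \<sigma> i = k then 1 else 0)"

lemma Pm_left: "(Pm \<sigma> ** U) $ i $ j = U$(\<sigma> i)$j"
  by (simp add: Pm_def matrix_matrix_mult_def if_distrib[where f="\<lambda>x. x * _"] cong: if_cong)

lemma Pm_right: "(U ** transpose (Pm \<sigma>)) $ i $ j = U$i$(\<sigma> j)"
  by (simp add: Pm_def transpose_def matrix_matrix_mult_def if_distrib[where f="\<lambda>x. _ * x"] cong: if_cong)

lemma Pm_orth: assumes "\<sigma> permutes UNIV" shows "orthogonal_matrix (Pm \<sigma>)"
proof -
  have inj: "\<sigma> i = \<sigma> j \<longleftrightarrow> i = j" for i j using assms by (metis permutes_inj injD)
  have "Pm \<sigma> ** transpose (Pm \<sigma>) = mat 1"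
    by (simp add: vec_eq_iff Pm_left mat_def) (simp add: Pm_def transpose_def inj)
  thus ?thesis by (simp add: orthogonal_matrix_def matrix_left_right_inverse)
qed

lemma sum2: fixes a b :: real assumes "r \<noteq> s"
  shows "(\<Sum>k\<in>UNIV. (if k = r then a else if k = s then b else 0) * f k) = a * f r + b * f (s::'n::finite)"
proof -
  have "(\<Sum>k\<in>UNIV. (if k = r then a else if k = s then b else 0) * f k)
      = (\<Sum>k\<in>UNIV. (if k = r then a * f r else 0) + (if k = s then b * f s else 0))"
    using assms by (intro sum.cong) auto
  also have "\<dots> = a * f r + b * f s" by (simp add: sum.distrib)
  finally show ?thesis .
qed

definition cR :: real where "cR = 1 / sqrt 2"
lemma cR_sq: "cR * cR = 1/2" by (simp add: cR_def)

definition Rm :: "'n::finite \<Rightarrow> 'n \<Rightarrow> real^'n^'n" where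
  "Rm r s = (\<chi> i k. if i = r then (if k = r then cR else if k = s then cR else 0)
     else if i = s then (if k = r then -cR else if k = s then cR else 0) else (if i = k then 1 else 0))"

lemma Rm_left: assumes "r \<noteq> s"
  shows "(Rm r s ** U) $ i $ j = (if i = r then cR * U$r$j + cR * U$s$j
     else if i = s then cR * U$s$j - cR * U$r$j else U$i$j)"
proof -
  have "(Rm r s ** U) $ i $ j = (\<Sum>k\<in>UNIV. Rm r s $ i $ k * U$k$j)"
    by (simp add: matrix_matrix_mult_def)
  also have "\<dots> = (if i = r then cR * U$r$j + cR * U$s$j
     else if i = s then cR * U$s$j - cR * U$r$j else U$i$j)"
  proof (cases "i = r")
    case True thus ?thesis using sum2[OF assms, of cR cR "\<lambda>k. U$k$j"] by (simp add: Rm_def)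
  next
    case F: False
    show ?thesis
    proof (cases "i = s")
      case True thus ?thesis using F sum2[OF assms, of "-cR" cR "\<lambda>k. U$k$j"] by (simp add: Rm_def)
    next
      case False
      thus ?thesis using F by (simp add: Rm_def if_distrib[where f="\<lambda>x. x * _"] cong: if_cong)
    qed
  qed
  finally show ?thesis .
qed

lemma Rm_orth: assumes "r \<noteq> s" shows "orthogonal_matrix (Rm r s)"
proof -
  have "Rm r s ** transpose (Rm r s) = mat 1"
    using assms cR_sq by (simp add: vec_eq_iff Rm_left mat_def)
      (auto simp: Rm_def transpose_def algebra_simps)
  thus ?thesis by (simp add: orthogonal_matrix_def matrix_left_right_inverse)
qed

context haar begin

definition E4 where "E4 a1 b1 a2 b2 a3 b3 a4 b4 = integral\<^sup>L M (\<lambda>U. U$a1$b1 * U$a2$b2 * U$a3$b3 * U$a4$b4)"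
definition E2 where "E2 a1 b1 a2 b2 = integral\<^sup>L M (\<lambda>U. U$a1$b1 * U$a2$b2)"

lemma E4_sign_row: "E4 a1 b1 a2 b2 a3 b3 a4 b4 = (sg r a1 * sg r a2 * sg r a3 * sg r a4) * E4 a1 b1 a2 b2 a3 b3 a4 b4"
proof -
  have "E4 a1 b1 a2 b2 a3 b3 a4 b4 = integral\<^sup>L M (\<lambda>U. (\<lambda>U. U$a1$b1 * U$a2$b2 * U$a3$b3 * U$a4$b4) (Dm r ** U))"
    unfolding E4_def by (rule inv_left[symmetric, OF Dm_orth]) measurable
  also have "\<dots> = integral\<^sup>L M (\<lambda>U. (sg r a1 * sg r a2 * sg r a3 * sg r a4) * (U$a1$b1 * U$a2$b2 * U$a3$b3 * U$a4$b4))"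
    by (simp add: Dm_left mult_ac)
  finally show ?thesis by (simp add: E4_def)
qed

lemma E4_sign_col: "E4 a1 b1 a2 b2 a3 b3 a4 b4 = (sg r b1 * sg r b2 * sg r b3 * sg r b4) * E4 a1 b1 a2 b2 a3 b3 a4 b4"
proof -
  have "E4 a1 b1 a2 b2 a3 b3 a4 b4 = integral\<^sup>L M (\<lambda>U. (\<lambda>U. U$a1$b1 * U$a2$b2 * U$a3$b3 * U$a4$b4) (U ** Dm r))"
    unfolding E4_def by (rule inv_right[symmetric, OF Dm_orth]) measurable
  also have "\<dots> = integral\<^sup>L M (\<lambda>U. (sg r b1 * sg r b2 * sg r b3 * sg r b4) * (U$a1$b1 * U$a2$b2 * U$a3$b3 * U$a4$b4))"
    by (simp add: Dm_right mult_ac)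
  finally show ?thesis by (simp add: E4_def)
qed

lemma E4_perm_row: assumes "\<sigma> permutes UNIV"
  shows "E4 (\<sigma> a1) b1 (\<sigma> a2) b2 (\<sigma> a3) b3 (\<sigma> a4) b4 = E4 a1 b1 a2 b2 a3 b3 a4 b4"
proof -
  have "E4 a1 b1 a2 b2 a3 b3 a4 b4 = integral\<^sup>L M (\<lambda>U. (\<lambda>U. U$a1$b1 * U$a2$b2 * U$a3$b3 * U$a4$b4) (Pm \<sigma> ** U))"
    unfolding E4_def by (rule inv_left[symmetric, OF Pm_orth[OF assms]]) measurable
  thus ?thesis by (simp add: Pm_left E4_def)
qed

lemma E4_perm_col: assumes "\<sigma> permutes UNIV"
  shows "E4 a1 (\<sigma> b1) a2 (\<sigma> b2) a3 (\<sigma> b3) a4 (\<sigma> b4) = E4 a1 b1 a2 b2 a3 b3 a4 b4"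
proof -
  have "E4 a1 b1 a2 b2 a3 b3 a4 b4 = integral\<^sup>L M (\<lambda>U. (\<lambda>U. U$a1$b1 * U$a2$b2 * U$a3$b3 * U$a4$b4) (U ** transpose (Pm \<sigma>)))"
    unfolding E4_def by (rule inv_right[symmetric]) (use Pm_orth[OF assms] in auto)
  thus ?thesis by (simp add: Pm_right E4_def)
qed

lemma E2_sign_row: "E2 a1 b1 a2 b2 = (sg r a1 * sg r a2) * E2 a1 b1 a2 b2"
proof -
  have "E2 a1 b1 a2 b2 = integral\<^sup>L M (\<lambda>U. (\<lambda>U. U$a1$b1 * U$a2$b2) (Dm r ** U))"
    unfolding E2_def by (rule inv_left[symmetric, OF Dm_orth]) measurable
  also have "\<dots> = integral\<^sup>L M (\<lambda>U. (sg r a1 * sg r a2) * (U$a1$b1 * U$a2$b2))"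
    by (simp add: Dm_left mult_ac)
  finally show ?thesis by (simp add: E2_def)
qed

lemma E2_sign_col: "E2 a1 b1 a2 b2 = (sg r b1 * sg r b2) * E2 a1 b1 a2 b2"
proof -
  have "E2 a1 b1 a2 b2 = integral\<^sup>L M (\<lambda>U. (\<lambda>U. U$a1$b1 * U$a2$b2) (U ** Dm r))"
    unfolding E2_def by (rule inv_right[symmetric, OF Dm_orth]) measurable
  also have "\<dots> = integral\<^sup>L M (\<lambda>U. (sg r b1 * sg r b2) * (U$a1$b1 * U$a2$b2))"
    by (simp add: Dm_right mult_ac)
  finally show ?thesis by (simp add: E2_def)
qed

lemma E2_perm_col: assumes "\<sigma> permutes UNIV"
  shows "E2 a1 (\<sigma> b1) a2 (\<sigma> b2) = E2 a1 b1 a2 b2"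
proof -
  have "E2 a1 b1 a2 b2 = integral\<^sup>L M (\<lambda>U. (\<lambda>U. U$a1$b1 * U$a2$b2) (U ** transpose (Pm \<sigma>)))"
    unfolding E2_def by (rule inv_right[symmetric]) (use Pm_orth[OF assms] in auto)
  thus ?thesis by (simp add: Pm_right E2_def)
qed

lemma E4_rowsum: "(\<Sum>j\<in>UNIV. E4 a1 b1 a2 b2 i j i' j) = (if i = i' then E2 a1 b1 a2 b2 else 0)"
proof -
  have "(\<Sum>j\<in>UNIV. E4 a1 b1 a2 b2 i j i' j) = integral\<^sup>L M (\<lambda>U. \<Sum>j\<in>UNIV. U$a1$b1 * U$a2$b2 * U$i$j * U$i'$j)"
    unfolding E4_def by (simp add: int4)
  also have "\<dots> = integral\<^sup>L M (\<lambda>U. (if i = i' then 1 else 0) * (U$a1$b1 * U$a2$b2))"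
  proof (rule integral_cong_AE)
    show "AE U in M. (\<Sum>j\<in>UNIV. U$a1$b1 * U$a2$b2 * U$i$j * U$i'$j) = (if i = i' then 1 else 0) * (U$a1$b1 * U$a2$b2)"
      using AE_orth
    proof eventually_elim
      case (elim U)
      have "(\<Sum>j\<in>UNIV. U$a1$b1 * U$a2$b2 * U$i$j * U$i'$j) = (U$a1$b1 * U$a2$b2) * (\<Sum>j\<in>UNIV. U$i$j * U$i'$j)"
        by (simp add: sum_distrib_left mult_ac)
      thus ?case using orth_rows[OF elim, of i i'] by simp
    qed
  qed (auto intro!: meas_M)
  also have "\<dots> = (if i = i' then E2 a1 b1 a2 b2 else 0)" by (simp add: E2_def)
  finally show ?thesis .
qed

lemma E4_colsum: "(\<Sum>i\<in>UNIV. E4 a1 b1 a2 b2 i j i j') = (if j = j' then E2 a1 b1 a2 b2 else 0)"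
proof -
  have "(\<Sum>i\<in>UNIV. E4 a1 b1 a2 b2 i j i j') = integral\<^sup>L M (\<lambda>U. \<Sum>i\<in>UNIV. U$a1$b1 * U$a2$b2 * U$i$j * U$i$j')"
    unfolding E4_def by (simp add: int4)
  also have "\<dots> = integral\<^sup>L M (\<lambda>U. (if j = j' then 1 else 0) * (U$a1$b1 * U$a2$b2))"
  proof (rule integral_cong_AE)
    show "AE U in M. (\<Sum>i\<in>UNIV. U$a1$b1 * U$a2$b2 * U$i$j * U$i$j') = (if j = j' then 1 else 0) * (U$a1$b1 * U$a2$b2)"
      using AE_orth
    proof eventually_elim
      case (elim U)
      have "(\<Sum>i\<in>UNIV. U$a1$b1 * U$a2$b2 * U$i$j * U$i$j') = (U$a1$b1 * U$a2$b2) * (\<Sum>i\<in>UNIV. U$i$j * U$i$j')"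
        by (simp add: sum_distrib_left mult_ac)
      thus ?case using orth_cols[OF elim, of j j'] by simp
    qed
  qed (auto intro!: meas_M)
  also have "\<dots> = (if j = j' then E2 a1 b1 a2 b2 else 0)" by (simp add: E2_def)
  finally show ?thesis .
qed

lemma E2_rowsum: "(\<Sum>j\<in>UNIV. E2 i j i' j) = (if i = i' then 1 else 0)"
proof -
  interpret prob_space M by (rule prob)
  have "(\<Sum>j\<in>UNIV. E2 i j i' j) = integral\<^sup>L M (\<lambda>U. \<Sum>j\<in>UNIV. U$i$j * U$i'$j)"
    unfolding E2_def by (simp add: int2)
  also have "\<dots> = integral\<^sup>L M (\<lambda>U. (if i = i' then 1 else 0))"
  proof (rule integral_cong_AE)
    show "AE U in M. (\<Sum>j\<in>UNIV. U$i$j * U$i'$j) = (if i = i' then 1 else 0)"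
      using AE_orth by eventually_elim (rule orth_rows)
  qed (auto intro!: meas_M)
  also have "\<dots> = (if i = i' then 1 else 0)" by (simp add: prob_space)
  finally show ?thesis .
qed

end

lemma swap_perm: "Transposition.transpose a b permutes (UNIV::'n::finite set)"
  by (rule permutes_swap_id) auto

lemma sum_const_except:
  fixes f :: "'n::finite \<Rightarrow> real"
  assumes "\<And>j. j \<noteq> c \<Longrightarrow> f j = K"
  shows "(\<Sum>j\<in>UNIV. f j) = f c + (real CARD('n) - 1) * K"
proof -
  have "(\<Sum>j\<in>UNIV. f j) = f c + (\<Sum>j\<in>UNIV - {c}. f j)"
    by (rule sum.remove) auto
  also have "(\<Sum>j\<in>UNIV - {c}. f j) = (\<Sum>j\<in>UNIV - {c}. K)" using assms by (intro sum.cong) auto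
  also have "\<dots> = (real CARD('n) - 1) * K"
    by (simp add: card_Diff_singleton of_nat_diff)
  finally show ?thesis .
qed

lemma quart: fixes x y c :: real assumes "c * c = 1/2"
  shows "(c*x+c*y)*(c*x+c*y)*(c*x+c*y)*(c*x+c*y) = 1/4*(x*x*x*x) + (x*x*x*y) + 3/2*(x*x*y*y) + (x*y*y*y) + 1/4*(y*y*y*y)"
proof -
  have "(c*x+c*y)*(c*x+c*y)*(c*x+c*y)*(c*x+c*y) = (c*c)*(c*c)*((x+y)*(x+y)*(x+y)*(x+y))"
    by (simp add: algebra_simps)
  also have "\<dots> = 1/4*(x*x*x*x) + (x*x*x*y) + 3/2*(x*x*y*y) + (x*y*y*y) + 1/4*(y*y*y*y)"
    unfolding assms by (simp add: algebra_simps)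
  finally show ?thesis .
qed

context haar begin

lemma E4_odd_row: "sg r a1 * sg r a2 * sg r a3 * sg r a4 = -1 \<Longrightarrow> E4 a1 b1 a2 b2 a3 b3 a4 b4 = 0"
  using E4_sign_row[of a1 b1 a2 b2 a3 b3 a4 b4 r] by simp
lemma E4_odd_col: "sg r b1 * sg r b2 * sg r b3 * sg r b4 = -1 \<Longrightarrow> E4 a1 b1 a2 b2 a3 b3 a4 b4 = 0"
  using E4_sign_col[of a1 b1 a2 b2 a3 b3 a4 b4 r] by simp

lemma E4_rot: assumes "r \<noteq> s"
  shows "E4 r c r c r c r c = 1/4 * E4 r c r c r c r c + E4 r c r c r c s c + 3/2 * E4 r c r c s c s c
          + E4 r c s c s c s c + 1/4 * E4 s c s c s c s c"
proof -
  have "E4 r c r c r c r c = integral\<^sup>L M (\<lambda>U. (\<lambda>U. U$r$c * U$r$c * U$r$c * U$r$c) (Rm r s ** U))"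
    unfolding E4_def by (rule inv_left[symmetric, OF Rm_orth[OF assms]]) measurable
  also have "\<dots> = integral\<^sup>L M (\<lambda>U. 1/4*(U$r$c*U$r$c*U$r$c*U$r$c) + (U$r$c*U$r$c*U$r$c*U$s$c) + 3/2*(U$r$c*U$r$c*U$s$c*U$s$c) + (U$r$c*U$s$c*U$s$c*U$s$c) + 1/4*(U$s$c*U$s$c*U$s$c*U$s$c))"
    by (simp add: Rm_left[OF assms] quart[OF cR_sq])
  also have "\<dots> = 1/4 * E4 r c r c r c r c + E4 r c r c r c s c + 3/2 * E4 r c r c s c s c
          + E4 r c s c s c s c + 1/4 * E4 s c s c s c s c"
    unfolding E4_def by (simp add: int4)
  finally show ?thesis .
qed

end

lemma solve_lin: fixes a x b :: real shows "a \<noteq> 0 \<Longrightarrow> a * x = b \<Longrightarrow> x = b / a"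
  by (simp add: field_simps)
lemma ar1: fixes n x :: real assumes "n \<ge> 2" "3*x + (n-1)*x = 1/n" shows "x = 1/(n*(n+2))"
proof -
  have "(n+2)*x = 1/n" using assms(2) by (simp add: algebra_simps)
  hence "n * ((n+2)*x) = 1" using assms(1) by simp
  hence "(n*(n+2)) * x = 1" by (simp add: mult.assoc)
  thus ?thesis by (rule solve_lin[rotated]) (use assms(1) in simp)
qed
lemma ar2: fixes n x :: real assumes "n \<ge> 2" "3/(n*(n+2)) + (n-1)*x = 1/n" shows "x = 1/(n*(n+2))"
proof -
  have d: "n*(n+2) \<noteq> 0" using assms(1) by simp
  have "n*(n+2) * (3/(n*(n+2))) + n*(n+2) * ((n-1)*x) = n*(n+2)*(1/n)" using assms(2)
    by (simp only: distrib_left[symmetric])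
  moreover have "n*(n+2) * (3/(n*(n+2))) = 3" using d by simp
  moreover have "n*(n+2)*(1/n) = n+2" using assms(1) by simp
  ultimately have "3 + n*(n+2)*(n-1)*x = n+2" by (simp add: mult.assoc)
  hence "(n-1) * (n*(n+2)*x) = (n-1) * 1" by (simp add: algebra_simps)
  hence "n*(n+2)*x = 1" using assms(1) by simp
  thus ?thesis by (rule solve_lin[rotated]) (use d in simp)
qed
lemma ar3: fixes n x :: real assumes "n \<ge> 2" "1/(n*(n+2)) + (n-1)*x = 1/n" shows "x = (n+1)/(n*(n-1)*(n+2))"
proof -
  have d: "n*(n+2) \<noteq> 0" using assms(1) by simp
  have "n*(n+2) * (1/(n*(n+2)) + (n-1)*x) = n*(n+2)*(1/n)" using assms(2) by simp
  hence "1 + n*(n+2)*(n-1)*x = n+2" using d assms(1) by (simp add: algebra_simps)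
  hence "(n*(n-1)*(n+2))*x = n+1" by (simp add: algebra_simps)
  thus ?thesis by (rule solve_lin[rotated]) (use assms(1) in simp)
qed
lemma ar4: fixes n x :: real assumes "n \<ge> 2" "1/(n*(n+2)) + (n-1)*x = 0" shows "x = -1/(n*(n-1)*(n+2))"
proof -
  have d: "n*(n+2) \<noteq> 0" using assms(1) by simp
  have "n*(n+2) * (1/(n*(n+2)) + (n-1)*x) = 0" using assms(2) by simp
  hence "1 + n*(n+2)*(n-1)*x = 0" using d by (simp add: algebra_simps)
  hence "(n*(n-1)*(n+2))*x = -1" by (simp add: algebra_simps)
  thus ?thesis by (rule solve_lin[rotated]) (use assms(1) in simp)
qed

locale haar2 = haar M for M :: "(real^'n^'n) measure" +
  assumes card2: "CARD('n) \<ge> 2"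
begin


lemma ncard2: "real CARD('n) \<ge> 2" using card2 by simp

lemma other: obtains s :: 'n where "s \<noteq> r"
proof -
  have "card (UNIV - {r}) \<ge> 1" using card2 by (simp add: card_Diff_singleton)
  hence "UNIV - {r} \<noteq> {}" by (metis card.empty not_one_le_zero)
  thus ?thesis using that by auto
qed

lemma E2_val: "E2 r c r c = 1/real CARD('n)"
proof -
  have e: "E2 r j r j = E2 r c r c" for j
    using E2_perm_col[OF swap_perm[of c j], of r c r c] by simp
  have "(\<Sum>j\<in>UNIV. E2 r j r j) = (\<Sum>j\<in>(UNIV::'n set). E2 r c r c)" using e by (intro sum.cong) auto
  hence "(\<Sum>j\<in>UNIV. E2 r j r j) = real CARD('n) * E2 r c r c" by simp
  moreover have "(\<Sum>j\<in>UNIV. E2 r j r j) = 1" using E2_rowsum[of r r] by simp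
  ultimately show ?thesis using ncard2 by (simp add: field_simps)
qed

lemma E2_gen: "E2 a b c d = (if a = c \<and> b = d then 1/real CARD('n) else 0)"
proof (cases "a = c")
  case False
  thus ?thesis using E2_sign_row[of a b c d a] by (simp add: sg_def)
next
  case True
  show ?thesis
  proof (cases "b = d")
    case False
    thus ?thesis using E2_sign_col[of a b c d b] by (simp add: sg_def)
  qed (use True E2_val in simp)
qed

lemma V3_rel: assumes "r \<noteq> s" shows "E4 r c r c r c r c = 3 * E4 r c r c s c s c"
proof -
  have z1: "E4 r c r c r c s c = 0" by (rule E4_odd_row[where r=r]) (use assms in \<open>simp add: sg_def\<close>)
  have z2: "E4 r c s c s c s c = 0" by (rule E4_odd_row[where r=s]) (use assms in \<open>simp add: sg_def\<close>)
  have z3: "E4 s c s c s c s c = E4 r c r c r c r c"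
    using E4_perm_row[OF swap_perm[of s r], of r c r c r c r c]
    by simp
  show ?thesis using E4_rot[OF assms, of c] z1 z2 z3 by simp
qed

lemma V3: assumes "r \<noteq> s" shows "E4 r c r c s c s c = 1/(real CARD('n)*(real CARD('n)+2))"
proof -
  have "\<And>i. i \<noteq> r \<Longrightarrow> E4 r c r c i c i c = E4 r c r c s c s c"
  proof -
    fix i assume i: "i \<noteq> r"
    show "E4 r c r c i c i c = E4 r c r c s c s c"
      using E4_perm_row[OF swap_perm[of s i], of r c r c s c s c]
        i assms by (simp add: swap_id_eq)
  qed
  hence "(\<Sum>i\<in>UNIV. E4 r c r c i c i c) = E4 r c r c r c r c + (real CARD('n) - 1) * E4 r c r c s c s c"
    by (rule sum_const_except)
  moreover have "(\<Sum>i\<in>UNIV. E4 r c r c i c i c) = 1/real CARD('n)" using E4_colsum[of r c r c c c] E2_val by simp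
  ultimately have "3 * E4 r c r c s c s c + (real CARD('n) - 1) * E4 r c r c s c s c = 1/real CARD('n)"
    using V3_rel[OF assms, of c] by simp
  thus ?thesis using ncard2 by (intro ar1) (auto simp: algebra_simps)
qed

lemma V1: "E4 r c r c r c r c = 3/(real CARD('n)*(real CARD('n)+2))"
proof -
  obtain s where "s \<noteq> r" by (rule other)
  thus ?thesis using V3_rel[of r s c] V3[of r s c] by simp
qed

lemma V2: assumes "c \<noteq> c'" shows "E4 r c r c r c' r c' = 1/(real CARD('n)*(real CARD('n)+2))"
proof -
  have "\<And>j. j \<noteq> c \<Longrightarrow> E4 r c r c r j r j = E4 r c r c r c' r c'"
  proof -
    fix j assume j: "j \<noteq> c"
    show "E4 r c r c r j r j = E4 r c r c r c' r c'"
      using E4_perm_col[OF swap_perm[of c' j], of r c r c r c' r c']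
        j assms by (simp add: swap_id_eq)
  qed
  hence "(\<Sum>j\<in>UNIV. E4 r c r c r j r j) = E4 r c r c r c r c + (real CARD('n) - 1) * E4 r c r c r c' r c'"
    by (rule sum_const_except)
  moreover have "(\<Sum>j\<in>UNIV. E4 r c r c r j r j) = 1/real CARD('n)" using E4_rowsum[of r c r c r r] E2_val by simp
  ultimately have "3/(real CARD('n)*(real CARD('n)+2)) + (real CARD('n) - 1) * E4 r c r c r c' r c' = 1/real CARD('n)"
    using V1[of r c] by simp
  thus ?thesis using ncard2 by (intro ar2) auto
qed

lemma V4: assumes "r \<noteq> r'" "c \<noteq> c'" shows "E4 r c r c r' c' r' c' = (real CARD('n)+1)/(real CARD('n)*(real CARD('n)-1)*(real CARD('n)+2))"
proof -
  have "\<And>j. j \<noteq> c \<Longrightarrow> E4 r c r c r' j r' j = E4 r c r c r' c' r' c'"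
  proof -
    fix j assume j: "j \<noteq> c"
    show "E4 r c r c r' j r' j = E4 r c r c r' c' r' c'"
      using E4_perm_col[OF swap_perm[of c' j], of r c r c r' c' r' c']
        j assms by (simp add: swap_id_eq)
  qed
  hence "(\<Sum>j\<in>UNIV. E4 r c r c r' j r' j) = E4 r c r c r' c r' c + (real CARD('n) - 1) * E4 r c r c r' c' r' c'"
    by (rule sum_const_except)
  moreover have "(\<Sum>j\<in>UNIV. E4 r c r c r' j r' j) = 1/real CARD('n)" using E4_rowsum[of r c r c r' r'] E2_val by simp
  ultimately have "1/(real CARD('n)*(real CARD('n)+2)) + (real CARD('n) - 1) * E4 r c r c r' c' r' c' = 1/real CARD('n)"
    using V3[OF assms(1), of c] by simp
  thus ?thesis using ncard2 by (intro ar3) auto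
qed

lemma V5: assumes "r \<noteq> r'" "c \<noteq> c'" shows "E4 r c r c' r' c r' c' = -1/(real CARD('n)*(real CARD('n)-1)*(real CARD('n)+2))"
proof -
  have "\<And>j. j \<noteq> c \<Longrightarrow> E4 r c r' c r j r' j = E4 r c r' c r c' r' c'"
  proof -
    fix j assume j: "j \<noteq> c"
    show "E4 r c r' c r j r' j = E4 r c r' c r c' r' c'"
      using E4_perm_col[OF swap_perm[of c' j], of r c r' c r c' r' c']
        j assms by (simp add: swap_id_eq)
  qed
  hence "(\<Sum>j\<in>UNIV. E4 r c r' c r j r' j) = E4 r c r' c r c r' c + (real CARD('n) - 1) * E4 r c r' c r c' r' c'"
    by (rule sum_const_except)
  moreover have "(\<Sum>j\<in>UNIV. E4 r c r' c r j r' j) = 0" using E4_rowsum[of r c r' c r r'] assms by simp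
  moreover have "E4 r c r' c r c r' c = E4 r c r c r' c r' c" by (simp add: E4_def mult_ac)
  moreover have "E4 r c r' c r c' r' c' = E4 r c r c' r' c r' c'" by (simp add: E4_def mult_ac)
  ultimately have "1/(real CARD('n)*(real CARD('n)+2)) + (real CARD('n) - 1) * E4 r c r c' r' c r' c' = 0"
    using V3[OF assms(1), of c] by simp
  thus ?thesis using ncard2 by (intro ar4) auto
qed

end

definition dl :: "'a \<Rightarrow> 'a \<Rightarrow> real" where "dl x y = (if x = y then 1 else 0)"
definition wA :: "real \<Rightarrow> real" where "wA n = (n+1)/(n*(n-1)*(n+2))"
definition wB :: "real \<Rightarrow> real" where "wB n = -1/(n*(n-1)*(n+2))"
definition Wg :: "real \<Rightarrow> 'a \<Rightarrow> 'a \<Rightarrow> 'a \<Rightarrow> 'a \<Rightarrow> 'b \<Rightarrow> 'b \<Rightarrow> 'b \<Rightarrow> 'b \<Rightarrow> real" where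
  "Wg n a1 a2 a3 a4 b1 b2 b3 b4 =
     wA n * (dl a1 a2 * dl a3 a4 * (dl b1 b2 * dl b3 b4) + dl a1 a3 * dl a2 a4 * (dl b1 b3 * dl b2 b4)
             + dl a1 a4 * dl a2 a3 * (dl b1 b4 * dl b2 b3))
   + wB n * (dl a1 a2 * dl a3 a4 * (dl b1 b3 * dl b2 b4) + dl a1 a2 * dl a3 a4 * (dl b1 b4 * dl b2 b3)
           + dl a1 a3 * dl a2 a4 * (dl b1 b2 * dl b3 b4) + dl a1 a3 * dl a2 a4 * (dl b1 b4 * dl b2 b3)
           + dl a1 a4 * dl a2 a3 * (dl b1 b2 * dl b3 b4) + dl a1 a4 * dl a2 a3 * (dl b1 b3 * dl b2 b4))"

lemma W11: fixes n :: real assumes "n \<ge> 2" shows "3 * wA n + 6 * wB n = 3/(n*(n+2))"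
proof -
  have nz: "n*(n-1)*(n+2) \<noteq> 0" "n - 1 \<noteq> 0" using assms by auto
  have "3 * wA n + 6 * wB n = (3*(n+1) - 6)/(n*(n-1)*(n+2))" by (simp add: wA_def wB_def diff_divide_distrib add_divide_distrib)
  also have "3*(n+1) - 6 = (n-1)*3" by (simp add: algebra_simps)
  also have "(n-1)*3/(n*(n-1)*(n+2)) = ((n-1)*3)/((n-1)*(n*(n+2)))" by (simp add: mult_ac)
  also have "\<dots> = 3/(n*(n+2))" using nz(2) by (rule nonzero_mult_divide_mult_cancel_left)
  finally show ?thesis .
qed

lemma W12: fixes n :: real assumes "n \<ge> 2" shows "wA n + 2 * wB n = 1/(n*(n+2))"
proof -
  have nz: "n*(n-1)*(n+2) \<noteq> 0" "n - 1 \<noteq> 0" using assms by auto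
  have "wA n + 2 * wB n = ((n+1) - 2)/(n*(n-1)*(n+2))" by (simp add: wA_def wB_def diff_divide_distrib add_divide_distrib)
  also have "(n+1) - 2 = (n-1)*1" by (simp add: algebra_simps)
  also have "(n-1)*1/(n*(n-1)*(n+2)) = ((n-1)*1)/((n-1)*(n*(n+2)))" by (simp add: mult_ac)
  also have "\<dots> = 1/(n*(n+2))" using nz(2) by (rule nonzero_mult_divide_mult_cancel_left)
  finally show ?thesis .
qed

lemma cls: "(\<exists>r. sg r a1 * sg r a2 * sg r a3 * sg r a4 = -1) \<or> (a2 = a1 \<and> a3 = a1 \<and> a4 = a1)
  \<or> (a2 = a1 \<and> a4 = a3 \<and> a1 \<noteq> a3) \<or> (a3 = a1 \<and> a4 = a2 \<and> a1 \<noteq> a2) \<or> (a4 = a1 \<and> a3 = a2 \<and> a1 \<noteq> a2)"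
proof -
  have "sg a1 a1 * sg a1 a2 * sg a1 a3 * sg a1 a4 = -1 \<or> sg a2 a1 * sg a2 a2 * sg a2 a3 * sg a2 a4 = -1 \<or>
     sg a3 a1 * sg a3 a2 * sg a3 a3 * sg a3 a4 = -1 \<or> (a2 = a1 \<and> a3 = a1 \<and> a4 = a1)
  \<or> (a2 = a1 \<and> a4 = a3 \<and> a1 \<noteq> a3) \<or> (a3 = a1 \<and> a4 = a2 \<and> a1 \<noteq> a2) \<or> (a4 = a1 \<and> a3 = a2 \<and> a1 \<noteq> a2)"
    unfolding sg_def
    by (cases "a1=a2"; cases "a1=a3"; cases "a1=a4"; cases "a2=a3"; cases "a2=a4"; cases "a3=a4"; simp)
  thus ?thesis by blast
qed

lemma odd_dl: "sg r a1 * sg r a2 * sg r a3 * sg r a4 = -1 \<Longrightarrow>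
  dl a1 a2 * dl a3 a4 = 0 \<and> dl a1 a3 * dl a2 a4 = 0 \<and> dl a1 a4 * dl a2 a3 = 0"
  by (auto simp: sg_def dl_def split: if_splits)

context haar2 begin

lemma odd_row: assumes "sg r a1 * sg r a2 * sg r a3 * sg r a4 = -1"
  shows "E4 a1 b1 a2 b2 a3 b3 a4 b4 = Wg (real CARD('n)) a1 a2 a3 a4 b1 b2 b3 b4"
proof -
  from odd_dl[OF assms] have h: "dl a1 a2 * dl a3 a4 = 0" "dl a1 a3 * dl a2 a4 = 0" "dl a1 a4 * dl a2 a3 = 0" by auto
  show ?thesis unfolding Wg_def E4_odd_row[OF assms]
    by (simp only: h mult_zero_left mult_zero_right add_0_left add_0_right)
qed

lemma odd_col: assumes "sg r b1 * sg r b2 * sg r b3 * sg r b4 = -1"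
  shows "E4 a1 b1 a2 b2 a3 b3 a4 b4 = Wg (real CARD('n)) a1 a2 a3 a4 b1 b2 b3 b4"
proof -
  from odd_dl[OF assms] have h: "dl b1 b2 * dl b3 b4 = 0" "dl b1 b3 * dl b2 b4 = 0" "dl b1 b4 * dl b2 b3 = 0" by auto
  show ?thesis unfolding Wg_def E4_odd_col[OF assms]
    by (simp only: h mult_zero_left mult_zero_right add_0_left add_0_right)
qed

lemma c_R1_C1: assumes "a2 = a1" "a3 = a1" "a4 = a1" "b2 = b1" "b3 = b1" "b4 = b1"
  shows "E4 a1 b1 a2 b2 a3 b3 a4 b4 = Wg (real CARD('n)) a1 a2 a3 a4 b1 b2 b3 b4"
proof -
  have "E4 a1 b1 a2 b2 a3 b3 a4 b4 = E4 a1 b1 a1 b1 a1 b1 a1 b1" using assms by (simp add: E4_def mult_ac)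
  also have "\<dots> = 3/(real CARD('n)*(real CARD('n)+2))" by (rule V1)
  also have "\<dots> = 3 * wA (real CARD('n)) + 6 * wB (real CARD('n))" using ncard2 by (simp add: W11)
  also have "\<dots> = Wg (real CARD('n)) a1 a2 a3 a4 b1 b2 b3 b4" using assms by (simp add: Wg_def dl_def algebra_simps)
  finally show ?thesis .
qed

lemma c_R1_C2a: assumes "a2 = a1" "a3 = a1" "a4 = a1" "b2 = b1" "b4 = b3" "b1 \<noteq> b3"
  shows "E4 a1 b1 a2 b2 a3 b3 a4 b4 = Wg (real CARD('n)) a1 a2 a3 a4 b1 b2 b3 b4"
proof -
  have "E4 a1 b1 a2 b2 a3 b3 a4 b4 = E4 a1 b1 a1 b1 a1 b3 a1 b3" using assms by (simp add: E4_def mult_ac)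
  also have "\<dots> = 1/(real CARD('n)*(real CARD('n)+2))" by (rule V2) (use assms in auto)
  also have "\<dots> = wA (real CARD('n)) + 2 * wB (real CARD('n))" using ncard2 by (simp add: W12)
  also have "\<dots> = Wg (real CARD('n)) a1 a2 a3 a4 b1 b2 b3 b4" using assms by (simp add: Wg_def dl_def algebra_simps)
  finally show ?thesis .
qed

lemma c_R1_C2b: assumes "a2 = a1" "a3 = a1" "a4 = a1" "b3 = b1" "b4 = b2" "b1 \<noteq> b2"
  shows "E4 a1 b1 a2 b2 a3 b3 a4 b4 = Wg (real CARD('n)) a1 a2 a3 a4 b1 b2 b3 b4"
proof -
  have "E4 a1 b1 a2 b2 a3 b3 a4 b4 = E4 a1 b1 a1 b1 a1 b2 a1 b2" using assms by (simp add: E4_def mult_ac)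
  also have "\<dots> = 1/(real CARD('n)*(real CARD('n)+2))" by (rule V2) (use assms in auto)
  also have "\<dots> = wA (real CARD('n)) + 2 * wB (real CARD('n))" using ncard2 by (simp add: W12)
  also have "\<dots> = Wg (real CARD('n)) a1 a2 a3 a4 b1 b2 b3 b4" using assms by (simp add: Wg_def dl_def algebra_simps)
  finally show ?thesis .
qed

lemma c_R1_C2c: assumes "a2 = a1" "a3 = a1" "a4 = a1" "b4 = b1" "b3 = b2" "b1 \<noteq> b2"
  shows "E4 a1 b1 a2 b2 a3 b3 a4 b4 = Wg (real CARD('n)) a1 a2 a3 a4 b1 b2 b3 b4"
proof -
  have "E4 a1 b1 a2 b2 a3 b3 a4 b4 = E4 a1 b1 a1 b1 a1 b2 a1 b2" using assms by (simp add: E4_def mult_ac)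
  also have "\<dots> = 1/(real CARD('n)*(real CARD('n)+2))" by (rule V2) (use assms in auto)
  also have "\<dots> = wA (real CARD('n)) + 2 * wB (real CARD('n))" using ncard2 by (simp add: W12)
  also have "\<dots> = Wg (real CARD('n)) a1 a2 a3 a4 b1 b2 b3 b4" using assms by (simp add: Wg_def dl_def algebra_simps)
  finally show ?thesis .
qed

lemma c_R2a_C1: assumes "a2 = a1" "a4 = a3" "a1 \<noteq> a3" "b2 = b1" "b3 = b1" "b4 = b1"
  shows "E4 a1 b1 a2 b2 a3 b3 a4 b4 = Wg (real CARD('n)) a1 a2 a3 a4 b1 b2 b3 b4"
proof -
  have "E4 a1 b1 a2 b2 a3 b3 a4 b4 = E4 a1 b1 a1 b1 a3 b1 a3 b1" using assms by (simp add: E4_def mult_ac)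
  also have "\<dots> = 1/(real CARD('n)*(real CARD('n)+2))" by (rule V3) (use assms in auto)
  also have "\<dots> = wA (real CARD('n)) + 2 * wB (real CARD('n))" using ncard2 by (simp add: W12)
  also have "\<dots> = Wg (real CARD('n)) a1 a2 a3 a4 b1 b2 b3 b4" using assms by (simp add: Wg_def dl_def algebra_simps)
  finally show ?thesis .
qed

lemma c_R2a_C2a: assumes "a2 = a1" "a4 = a3" "a1 \<noteq> a3" "b2 = b1" "b4 = b3" "b1 \<noteq> b3"
  shows "E4 a1 b1 a2 b2 a3 b3 a4 b4 = Wg (real CARD('n)) a1 a2 a3 a4 b1 b2 b3 b4"
proof -
  have "E4 a1 b1 a2 b2 a3 b3 a4 b4 = E4 a1 b1 a1 b1 a3 b3 a3 b3" using assms by (simp add: E4_def mult_ac)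
  also have "\<dots> = (real CARD('n)+1)/(real CARD('n)*(real CARD('n)-1)*(real CARD('n)+2))" by (rule V4) (use assms in auto)
  also have "\<dots> = wA (real CARD('n))" using ncard2 by (simp add: wA_def)
  also have "\<dots> = Wg (real CARD('n)) a1 a2 a3 a4 b1 b2 b3 b4" using assms by (simp add: Wg_def dl_def algebra_simps)
  finally show ?thesis .
qed

lemma c_R2a_C2b: assumes "a2 = a1" "a4 = a3" "a1 \<noteq> a3" "b3 = b1" "b4 = b2" "b1 \<noteq> b2"
  shows "E4 a1 b1 a2 b2 a3 b3 a4 b4 = Wg (real CARD('n)) a1 a2 a3 a4 b1 b2 b3 b4"
proof -
  have "E4 a1 b1 a2 b2 a3 b3 a4 b4 = E4 a1 b1 a1 b2 a3 b1 a3 b2" using assms by (simp add: E4_def mult_ac)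
  also have "\<dots> = -1/(real CARD('n)*(real CARD('n)-1)*(real CARD('n)+2))" by (rule V5) (use assms in auto)
  also have "\<dots> = wB (real CARD('n))" using ncard2 by (simp add: wB_def)
  also have "\<dots> = Wg (real CARD('n)) a1 a2 a3 a4 b1 b2 b3 b4" using assms by (simp add: Wg_def dl_def algebra_simps)
  finally show ?thesis .
qed

lemma c_R2a_C2c: assumes "a2 = a1" "a4 = a3" "a1 \<noteq> a3" "b4 = b1" "b3 = b2" "b1 \<noteq> b2"
  shows "E4 a1 b1 a2 b2 a3 b3 a4 b4 = Wg (real CARD('n)) a1 a2 a3 a4 b1 b2 b3 b4"
proof -
  have "E4 a1 b1 a2 b2 a3 b3 a4 b4 = E4 a1 b1 a1 b2 a3 b1 a3 b2" using assms by (simp add: E4_def mult_ac)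
  also have "\<dots> = -1/(real CARD('n)*(real CARD('n)-1)*(real CARD('n)+2))" by (rule V5) (use assms in auto)
  also have "\<dots> = wB (real CARD('n))" using ncard2 by (simp add: wB_def)
  also have "\<dots> = Wg (real CARD('n)) a1 a2 a3 a4 b1 b2 b3 b4" using assms by (simp add: Wg_def dl_def algebra_simps)
  finally show ?thesis .
qed

lemma c_R2b_C1: assumes "a3 = a1" "a4 = a2" "a1 \<noteq> a2" "b2 = b1" "b3 = b1" "b4 = b1"
  shows "E4 a1 b1 a2 b2 a3 b3 a4 b4 = Wg (real CARD('n)) a1 a2 a3 a4 b1 b2 b3 b4"
proof -
  have "E4 a1 b1 a2 b2 a3 b3 a4 b4 = E4 a1 b1 a1 b1 a2 b1 a2 b1" using assms by (simp add: E4_def mult_ac)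
  also have "\<dots> = 1/(real CARD('n)*(real CARD('n)+2))" by (rule V3) (use assms in auto)
  also have "\<dots> = wA (real CARD('n)) + 2 * wB (real CARD('n))" using ncard2 by (simp add: W12)
  also have "\<dots> = Wg (real CARD('n)) a1 a2 a3 a4 b1 b2 b3 b4" using assms by (simp add: Wg_def dl_def algebra_simps)
  finally show ?thesis .
qed

lemma c_R2b_C2a: assumes "a3 = a1" "a4 = a2" "a1 \<noteq> a2" "b2 = b1" "b4 = b3" "b1 \<noteq> b3"
  shows "E4 a1 b1 a2 b2 a3 b3 a4 b4 = Wg (real CARD('n)) a1 a2 a3 a4 b1 b2 b3 b4"
proof -
  have "E4 a1 b1 a2 b2 a3 b3 a4 b4 = E4 a1 b1 a1 b3 a2 b1 a2 b3" using assms by (simp add: E4_def mult_ac)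
  also have "\<dots> = -1/(real CARD('n)*(real CARD('n)-1)*(real CARD('n)+2))" by (rule V5) (use assms in auto)
  also have "\<dots> = wB (real CARD('n))" using ncard2 by (simp add: wB_def)
  also have "\<dots> = Wg (real CARD('n)) a1 a2 a3 a4 b1 b2 b3 b4" using assms by (simp add: Wg_def dl_def algebra_simps)
  finally show ?thesis .
qed

lemma c_R2b_C2b: assumes "a3 = a1" "a4 = a2" "a1 \<noteq> a2" "b3 = b1" "b4 = b2" "b1 \<noteq> b2"
  shows "E4 a1 b1 a2 b2 a3 b3 a4 b4 = Wg (real CARD('n)) a1 a2 a3 a4 b1 b2 b3 b4"
proof -
  have "E4 a1 b1 a2 b2 a3 b3 a4 b4 = E4 a1 b1 a1 b1 a2 b2 a2 b2" using assms by (simp add: E4_def mult_ac)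
  also have "\<dots> = (real CARD('n)+1)/(real CARD('n)*(real CARD('n)-1)*(real CARD('n)+2))" by (rule V4) (use assms in auto)
  also have "\<dots> = wA (real CARD('n))" using ncard2 by (simp add: wA_def)
  also have "\<dots> = Wg (real CARD('n)) a1 a2 a3 a4 b1 b2 b3 b4" using assms by (simp add: Wg_def dl_def algebra_simps)
  finally show ?thesis .
qed

lemma c_R2b_C2c: assumes "a3 = a1" "a4 = a2" "a1 \<noteq> a2" "b4 = b1" "b3 = b2" "b1 \<noteq> b2"
  shows "E4 a1 b1 a2 b2 a3 b3 a4 b4 = Wg (real CARD('n)) a1 a2 a3 a4 b1 b2 b3 b4"
proof -
  have "E4 a1 b1 a2 b2 a3 b3 a4 b4 = E4 a1 b1 a1 b2 a2 b1 a2 b2" using assms by (simp add: E4_def mult_ac)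
  also have "\<dots> = -1/(real CARD('n)*(real CARD('n)-1)*(real CARD('n)+2))" by (rule V5) (use assms in auto)
  also have "\<dots> = wB (real CARD('n))" using ncard2 by (simp add: wB_def)
  also have "\<dots> = Wg (real CARD('n)) a1 a2 a3 a4 b1 b2 b3 b4" using assms by (simp add: Wg_def dl_def algebra_simps)
  finally show ?thesis .
qed

lemma c_R2c_C1: assumes "a4 = a1" "a3 = a2" "a1 \<noteq> a2" "b2 = b1" "b3 = b1" "b4 = b1"
  shows "E4 a1 b1 a2 b2 a3 b3 a4 b4 = Wg (real CARD('n)) a1 a2 a3 a4 b1 b2 b3 b4"
proof -
  have "E4 a1 b1 a2 b2 a3 b3 a4 b4 = E4 a1 b1 a1 b1 a2 b1 a2 b1" using assms by (simp add: E4_def mult_ac)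
  also have "\<dots> = 1/(real CARD('n)*(real CARD('n)+2))" by (rule V3) (use assms in auto)
  also have "\<dots> = wA (real CARD('n)) + 2 * wB (real CARD('n))" using ncard2 by (simp add: W12)
  also have "\<dots> = Wg (real CARD('n)) a1 a2 a3 a4 b1 b2 b3 b4" using assms by (simp add: Wg_def dl_def algebra_simps)
  finally show ?thesis .
qed

lemma c_R2c_C2a: assumes "a4 = a1" "a3 = a2" "a1 \<noteq> a2" "b2 = b1" "b4 = b3" "b1 \<noteq> b3"
  shows "E4 a1 b1 a2 b2 a3 b3 a4 b4 = Wg (real CARD('n)) a1 a2 a3 a4 b1 b2 b3 b4"
proof -
  have "E4 a1 b1 a2 b2 a3 b3 a4 b4 = E4 a1 b1 a1 b3 a2 b1 a2 b3" using assms by (simp add: E4_def mult_ac)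
  also have "\<dots> = -1/(real CARD('n)*(real CARD('n)-1)*(real CARD('n)+2))" by (rule V5) (use assms in auto)
  also have "\<dots> = wB (real CARD('n))" using ncard2 by (simp add: wB_def)
  also have "\<dots> = Wg (real CARD('n)) a1 a2 a3 a4 b1 b2 b3 b4" using assms by (simp add: Wg_def dl_def algebra_simps)
  finally show ?thesis .
qed

lemma c_R2c_C2b: assumes "a4 = a1" "a3 = a2" "a1 \<noteq> a2" "b3 = b1" "b4 = b2" "b1 \<noteq> b2"
  shows "E4 a1 b1 a2 b2 a3 b3 a4 b4 = Wg (real CARD('n)) a1 a2 a3 a4 b1 b2 b3 b4"
proof -
  have "E4 a1 b1 a2 b2 a3 b3 a4 b4 = E4 a1 b1 a1 b2 a2 b1 a2 b2" using assms by (simp add: E4_def mult_ac)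
  also have "\<dots> = -1/(real CARD('n)*(real CARD('n)-1)*(real CARD('n)+2))" by (rule V5) (use assms in auto)
  also have "\<dots> = wB (real CARD('n))" using ncard2 by (simp add: wB_def)
  also have "\<dots> = Wg (real CARD('n)) a1 a2 a3 a4 b1 b2 b3 b4" using assms by (simp add: Wg_def dl_def algebra_simps)
  finally show ?thesis .
qed

lemma c_R2c_C2c: assumes "a4 = a1" "a3 = a2" "a1 \<noteq> a2" "b4 = b1" "b3 = b2" "b1 \<noteq> b2"
  shows "E4 a1 b1 a2 b2 a3 b3 a4 b4 = Wg (real CARD('n)) a1 a2 a3 a4 b1 b2 b3 b4"
proof -
  have "E4 a1 b1 a2 b2 a3 b3 a4 b4 = E4 a1 b1 a1 b1 a2 b2 a2 b2" using assms by (simp add: E4_def mult_ac)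
  also have "\<dots> = (real CARD('n)+1)/(real CARD('n)*(real CARD('n)-1)*(real CARD('n)+2))" by (rule V4) (use assms in auto)
  also have "\<dots> = wA (real CARD('n))" using ncard2 by (simp add: wA_def)
  also have "\<dots> = Wg (real CARD('n)) a1 a2 a3 a4 b1 b2 b3 b4" using assms by (simp add: Wg_def dl_def algebra_simps)
  finally show ?thesis .
qed

lemma Wg_formula: "E4 a1 b1 a2 b2 a3 b3 a4 b4 = Wg (real CARD('n)) a1 a2 a3 a4 b1 b2 b3 b4"
  using cls[of a1 a2 a3 a4] cls[of b1 b2 b3 b4]
  by (elim disjE exE conjE; blast intro: odd_row odd_col c_R1_C1 c_R1_C2a c_R1_C2b c_R1_C2c c_R2a_C1 c_R2a_C2a c_R2a_C2b c_R2a_C2c c_R2b_C1 c_R2b_C2a c_R2b_C2b c_R2b_C2c c_R2c_C1 c_R2c_C2a c_R2c_C2b c_R2c_C2c)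

end

lemma LB_G: fixes a :: "'n::finite \<Rightarrow> 'n \<Rightarrow> real"
  shows "(\<Sum>i\<in>UNIV. \<Sum>j\<in>UNIV. \<Sum>k\<in>UNIV. \<Sum>j'\<in>UNIV. a i j * a k j * a i j' * a k j')
          \<ge> (\<Sum>i\<in>UNIV. \<Sum>j\<in>UNIV. a i j * a i j)^2 / real CARD('n)"
proof -
  define G where "G i k = (\<Sum>j\<in>UNIV. a i j * a k j)" for i k
  have e: "(\<Sum>i\<in>UNIV. \<Sum>j\<in>UNIV. \<Sum>k\<in>UNIV. \<Sum>j'\<in>UNIV. a i j * a k j * a i j' * a k j')
      = (\<Sum>i\<in>UNIV. \<Sum>k\<in>UNIV. (G i k)^2)"
  proof (rule sum.cong[OF refl])
    fix i
    have "(\<Sum>j\<in>UNIV. \<Sum>k\<in>UNIV. \<Sum>j'\<in>UNIV. a i j * a k j * a i j' * a k j')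
        = (\<Sum>k\<in>UNIV. \<Sum>j\<in>UNIV. \<Sum>j'\<in>UNIV. a i j * a k j * a i j' * a k j')"
      by (rule sum.swap)
    also have "\<dots> = (\<Sum>k\<in>UNIV. (G i k)^2)"
      by (simp add: G_def power2_eq_square sum_product mult_ac)
    finally show "(\<Sum>j\<in>UNIV. \<Sum>k\<in>UNIV. \<Sum>j'\<in>UNIV. a i j * a k j * a i j' * a k j') = (\<Sum>k\<in>UNIV. (G i k)^2)" .
  qed
  have "(\<Sum>i\<in>UNIV. (G i i)^2) \<le> (\<Sum>i\<in>UNIV. \<Sum>k\<in>UNIV. (G i k)^2)"
    by (intro sum_mono member_le_sum) auto
  moreover have "(\<Sum>i\<in>UNIV. G i i)^2 \<le> (\<Sum>i\<in>UNIV. (G i i)^2) * real CARD('n)"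
    using sum_squared_le_sum_of_squares[of "\<lambda>i. G i i" UNIV] by simp
  ultimately have "(\<Sum>i\<in>UNIV. G i i)^2 \<le> (\<Sum>i\<in>UNIV. \<Sum>k\<in>UNIV. (G i k)^2) * real CARD('n)"
    by (meson order_trans mult_right_mono of_nat_0_le_iff)
  hence "(\<Sum>i\<in>UNIV. G i i)^2 / real CARD('n) \<le> (\<Sum>i\<in>UNIV. \<Sum>k\<in>UNIV. (G i k)^2)"
    by (simp add: divide_le_eq)
  thus ?thesis unfolding e by (simp add: G_def)
qed

lemma p2_exp: "p2 (A ** U) = (\<Sum>i\<in>UNIV. \<Sum>j\<in>UNIV. \<Sum>k\<in>UNIV. \<Sum>l\<in>UNIV. A$i$j * A$k$l * (U$j$k * U$l$i))"
proof -
  have "p2 (A ** U) = (\<Sum>i\<in>UNIV. \<Sum>k\<in>UNIV. \<Sum>l\<in>UNIV. \<Sum>j\<in>UNIV. A$i$j * A$k$l * (U$j$k * U$l$i))"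
    by (simp add: p2_def trace_def matrix_matrix_mult_def sum_product mult_ac)
  also have "\<dots> = (\<Sum>i\<in>UNIV. \<Sum>k\<in>UNIV. \<Sum>j\<in>UNIV. \<Sum>l\<in>UNIV. A$i$j * A$k$l * (U$j$k * U$l$i))"
    by (intro sum.cong refl sum.swap)
  also have "\<dots> = (\<Sum>i\<in>UNIV. \<Sum>j\<in>UNIV. \<Sum>k\<in>UNIV. \<Sum>l\<in>UNIV. A$i$j * A$k$l * (U$j$k * U$l$i))"
    by (intro sum.cong refl sum.swap)
  finally show ?thesis .
qed

context haar2 begin

lemma sq_exp: "(p2 (A ** U))^2 = (\<Sum>i\<in>UNIV. \<Sum>i'\<in>UNIV. \<Sum>j'\<in>UNIV. \<Sum>j\<in>UNIV. \<Sum>k\<in>UNIV. \<Sum>k'\<in>UNIV. \<Sum>l\<in>UNIV. \<Sum>l'\<in>UNIV.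
     (A$i$j * A$k$l * A$i'$j' * A$k'$l') * (U$j$k * U$l$i * U$j'$k' * U$l'$i'))"
  by (simp add: p2_exp power2_eq_square sum_distrib_left sum_distrib_right mult_ac)

end

lemma sum_if_out: "(\<Sum>x\<in>S. if P then f x else 0) = (if P then sum f S else (0::real))"
  by simp
lemma mult_if_r: "(x::real) * (if P then y else 0) = (if P then x * y else 0)" by simp
lemma mult_if_l: "(if P then y else 0) * (x::real) = (if P then y * x else 0)" by simp

context haar2 begin

lemma Ef2: "integral\<^sup>L M (\<lambda>U. (p2 (A ** U))^2) = (\<Sum>i\<in>UNIV. \<Sum>i'\<in>UNIV. \<Sum>j'\<in>UNIV. \<Sum>j\<in>UNIV. \<Sum>k\<in>UNIV. \<Sum>k'\<in>UNIV. \<Sum>l\<in>UNIV. \<Sum>l'\<in>UNIV.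
     (A$i$j * A$k$l * A$i'$j' * A$k'$l') * Wg (real CARD('n)) j l j' l' k i k' i')"
  by (simp add: sq_exp int4 E4_def[symmetric] Wg_formula)


end

definition F :: "real^'n^'n \<Rightarrow> real" where "F A = (\<Sum>x\<in>UNIV. \<Sum>y\<in>UNIV. A$x$y * A$x$y)"

definition S8 :: "real^'n^'n \<Rightarrow> ('n \<Rightarrow> 'n \<Rightarrow> 'n \<Rightarrow> 'n \<Rightarrow> 'n \<Rightarrow> 'n \<Rightarrow> 'n \<Rightarrow> 'n \<Rightarrow> real) \<Rightarrow> real" where
  "S8 A g = (\<Sum>i\<in>UNIV. \<Sum>i'\<in>UNIV. \<Sum>j'\<in>UNIV. \<Sum>j\<in>UNIV. \<Sum>k\<in>UNIV. \<Sum>k'\<in>UNIV. \<Sum>l\<in>UNIV. \<Sum>l'\<in>UNIV. (A$i$j * A$k$l * A$i'$j' * A$k'$l') * g j l j' l' k i k' i')"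

lemma S8_add: "S8 A (\<lambda>a1 a2 a3 a4 b1 b2 b3 b4. g a1 a2 a3 a4 b1 b2 b3 b4 + h a1 a2 a3 a4 b1 b2 b3 b4) = S8 A g + S8 A h"
  by (simp add: S8_def distrib_left sum.distrib)

lemma S8_scale: "S8 A (\<lambda>a1 a2 a3 a4 b1 b2 b3 b4. c * g a1 a2 a3 a4 b1 b2 b3 b4) = c * S8 A g"
  by (simp add: S8_def sum_distrib_left mult_ac)

definition t11 :: "'a \<Rightarrow> 'a \<Rightarrow> 'a \<Rightarrow> 'a \<Rightarrow> 'a \<Rightarrow> 'a \<Rightarrow> 'a \<Rightarrow> 'a \<Rightarrow> real" where
  "t11 a1 a2 a3 a4 b1 b2 b3 b4 = dl a1 a2 * dl a3 a4 * (dl b1 b2 * dl b3 b4)"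
definition t12 :: "'a \<Rightarrow> 'a \<Rightarrow> 'a \<Rightarrow> 'a \<Rightarrow> 'a \<Rightarrow> 'a \<Rightarrow> 'a \<Rightarrow> 'a \<Rightarrow> real" where
  "t12 a1 a2 a3 a4 b1 b2 b3 b4 = dl a1 a2 * dl a3 a4 * (dl b1 b3 * dl b2 b4)"
definition t13 :: "'a \<Rightarrow> 'a \<Rightarrow> 'a \<Rightarrow> 'a \<Rightarrow> 'a \<Rightarrow> 'a \<Rightarrow> 'a \<Rightarrow> 'a \<Rightarrow> real" where
  "t13 a1 a2 a3 a4 b1 b2 b3 b4 = dl a1 a2 * dl a3 a4 * (dl b1 b4 * dl b2 b3)"
definition t21 :: "'a \<Rightarrow> 'a \<Rightarrow> 'a \<Rightarrow> 'a \<Rightarrow> 'a \<Rightarrow> 'a \<Rightarrow> 'a \<Rightarrow> 'a \<Rightarrow> real" where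
  "t21 a1 a2 a3 a4 b1 b2 b3 b4 = dl a1 a3 * dl a2 a4 * (dl b1 b2 * dl b3 b4)"
definition t22 :: "'a \<Rightarrow> 'a \<Rightarrow> 'a \<Rightarrow> 'a \<Rightarrow> 'a \<Rightarrow> 'a \<Rightarrow> 'a \<Rightarrow> 'a \<Rightarrow> real" where
  "t22 a1 a2 a3 a4 b1 b2 b3 b4 = dl a1 a3 * dl a2 a4 * (dl b1 b3 * dl b2 b4)"
definition t23 :: "'a \<Rightarrow> 'a \<Rightarrow> 'a \<Rightarrow> 'a \<Rightarrow> 'a \<Rightarrow> 'a \<Rightarrow> 'a \<Rightarrow> 'a \<Rightarrow> real" where
  "t23 a1 a2 a3 a4 b1 b2 b3 b4 = dl a1 a3 * dl a2 a4 * (dl b1 b4 * dl b2 b3)"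
definition t31 :: "'a \<Rightarrow> 'a \<Rightarrow> 'a \<Rightarrow> 'a \<Rightarrow> 'a \<Rightarrow> 'a \<Rightarrow> 'a \<Rightarrow> 'a \<Rightarrow> real" where
  "t31 a1 a2 a3 a4 b1 b2 b3 b4 = dl a1 a4 * dl a2 a3 * (dl b1 b2 * dl b3 b4)"
definition t32 :: "'a \<Rightarrow> 'a \<Rightarrow> 'a \<Rightarrow> 'a \<Rightarrow> 'a \<Rightarrow> 'a \<Rightarrow> 'a \<Rightarrow> 'a \<Rightarrow> real" where
  "t32 a1 a2 a3 a4 b1 b2 b3 b4 = dl a1 a4 * dl a2 a3 * (dl b1 b3 * dl b2 b4)"
definition t33 :: "'a \<Rightarrow> 'a \<Rightarrow> 'a \<Rightarrow> 'a \<Rightarrow> 'a \<Rightarrow> 'a \<Rightarrow> 'a \<Rightarrow> 'a \<Rightarrow> real" where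
  "t33 a1 a2 a3 a4 b1 b2 b3 b4 = dl a1 a4 * dl a2 a3 * (dl b1 b4 * dl b2 b3)"

lemma Wg_split: "Wg n = (\<lambda>a1 a2 a3 a4 b1 b2 b3 b4. wA n * (t11 a1 a2 a3 a4 b1 b2 b3 b4 + t22 a1 a2 a3 a4 b1 b2 b3 b4 + t33 a1 a2 a3 a4 b1 b2 b3 b4)
   + wB n * (t12 a1 a2 a3 a4 b1 b2 b3 b4 + t13 a1 a2 a3 a4 b1 b2 b3 b4 + t21 a1 a2 a3 a4 b1 b2 b3 b4 + t23 a1 a2 a3 a4 b1 b2 b3 b4 + t31 a1 a2 a3 a4 b1 b2 b3 b4 + t32 a1 a2 a3 a4 b1 b2 b3 b4))"
  by (intro ext) (simp add: Wg_def t11_def t12_def t13_def t21_def t22_def t23_def t31_def t32_def t33_def algebra_simps)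

lemma S8_Wg: "S8 A (Wg n) = wA n * (S8 A t11 + S8 A t22 + S8 A t33)
   + wB n * (S8 A t12 + S8 A t13 + S8 A t21 + S8 A t23 + S8 A t31 + S8 A t32)"
  unfolding Wg_split by (simp only: S8_add S8_scale)

definition GG :: "real^'n^'n \<Rightarrow> real" where
  "GG A = (\<Sum>x\<in>UNIV. \<Sum>z\<in>UNIV. \<Sum>y\<in>UNIV. \<Sum>w\<in>UNIV. A$x$y * A$z$y * (A$x$w * A$z$w))"

lemmas evs = S8_def dl_def mult_if_r mult_if_l sum_if_out

lemma S13: "S8 A t13 = GG A" by (simp add: evs t13_def GG_def mult_ac)
lemma S21: "S8 A t21 = GG A" by (simp add: evs t21_def GG_def mult_ac)
lemma S23: "S8 A t23 = GG A" by (simp add: evs t23_def GG_def mult_ac)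
lemma S31: "S8 A t31 = GG A" by (simp add: evs t31_def GG_def mult_ac)

lemma S12: "S8 A t12 = GG A"
proof -
  have "S8 A t12 = (\<Sum>i\<in>UNIV. \<Sum>j'\<in>UNIV. \<Sum>j\<in>UNIV. \<Sum>k\<in>UNIV. A$i$j * A$k$j * A$i$j' * A$k$j')"
    by (simp add: evs t12_def)
  also have "\<dots> = (\<Sum>i\<in>UNIV. \<Sum>j'\<in>UNIV. \<Sum>k\<in>UNIV. \<Sum>j\<in>UNIV. A$i$j * A$k$j * A$i$j' * A$k$j')"
    by (intro sum.cong refl sum.swap)
  also have "\<dots> = (\<Sum>i\<in>UNIV. \<Sum>k\<in>UNIV. \<Sum>j'\<in>UNIV. \<Sum>j\<in>UNIV. A$i$j * A$k$j * A$i$j' * A$k$j')"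
    by (intro sum.cong refl sum.swap)
  also have "\<dots> = GG A" by (simp add: GG_def mult_ac)
  finally show ?thesis .
qed

lemma S32: "S8 A t32 = GG A"
proof -
  have "S8 A t32 = (\<Sum>i\<in>UNIV. \<Sum>j'\<in>UNIV. \<Sum>j\<in>UNIV. \<Sum>k\<in>UNIV. A$i$j * A$k$j' * A$i$j' * A$k$j)"
    by (simp add: evs t32_def)
  also have "\<dots> = (\<Sum>i\<in>UNIV. \<Sum>j'\<in>UNIV. \<Sum>k\<in>UNIV. \<Sum>j\<in>UNIV. A$i$j * A$k$j' * A$i$j' * A$k$j)"
    by (intro sum.cong refl sum.swap)
  also have "\<dots> = (\<Sum>i\<in>UNIV. \<Sum>k\<in>UNIV. \<Sum>j'\<in>UNIV. \<Sum>j\<in>UNIV. A$i$j * A$k$j' * A$i$j' * A$k$j)"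
    by (intro sum.cong refl sum.swap)
  also have "\<dots> = GG A" by (simp add: GG_def mult_ac)
  finally show ?thesis .
qed

lemma FF: "F A * F A = (\<Sum>i\<in>UNIV. \<Sum>i'\<in>UNIV. \<Sum>j'\<in>UNIV. \<Sum>j\<in>UNIV. A$i$j * A$i$j * A$i'$j' * A$i'$j')"
proof -
  have "F A * F A = (\<Sum>i\<in>UNIV. \<Sum>i'\<in>UNIV. \<Sum>j\<in>UNIV. \<Sum>j'\<in>UNIV. A$i$j * A$i$j * A$i'$j' * A$i'$j')"
    by (simp add: F_def sum_product mult_ac)
  also have "\<dots> = (\<Sum>i\<in>UNIV. \<Sum>i'\<in>UNIV. \<Sum>j'\<in>UNIV. \<Sum>j\<in>UNIV. A$i$j * A$i$j * A$i'$j' * A$i'$j')"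
    by (intro sum.cong refl sum.swap)
  finally show ?thesis .
qed

lemma S11: "S8 A t11 = F A * F A" unfolding FF by (simp add: evs t11_def)
lemma S33: "S8 A t33 = F A * F A" unfolding FF by (simp add: evs t33_def mult_ac)
lemma S22: "S8 A t22 = F A * F A"
proof -
  have "S8 A t22 = (\<Sum>i\<in>UNIV. \<Sum>j\<in>UNIV. (A$i$j * A$i$j) * F A)"
    by (simp add: evs t22_def F_def sum_distrib_left mult_ac)
  also have "\<dots> = F A * F A" by (simp add: F_def sum_distrib_right)
  finally show ?thesis .
qed

lemma LB_GG: fixes A :: "real^'n^'n" shows "GG A \<ge> (F A)^2 / real CARD('n)"
proof -
  have "GG A = (\<Sum>i\<in>UNIV. \<Sum>j\<in>UNIV. \<Sum>k\<in>UNIV. \<Sum>j'\<in>UNIV. A$i$j * A$k$j * A$i$j' * A$k$j')"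
  proof -
    have "GG A = (\<Sum>i\<in>UNIV. \<Sum>k\<in>UNIV. \<Sum>j\<in>UNIV. \<Sum>j'\<in>UNIV. A$i$j * A$k$j * A$i$j' * A$k$j')"
      by (simp add: GG_def mult_ac)
    also have "\<dots> = (\<Sum>i\<in>UNIV. \<Sum>j\<in>UNIV. \<Sum>k\<in>UNIV. \<Sum>j'\<in>UNIV. A$i$j * A$k$j * A$i$j' * A$k$j')"
      by (intro sum.cong refl sum.swap)
    finally show ?thesis .
  qed
  thus ?thesis using LB_G[of "\<lambda>x y. A$x$y"] by (simp add: F_def)
qed

lemma final_arith: fixes n g :: real assumes "n \<ge> 2" "g \<ge> n"
  shows "wA n * (n*n + n*n + n*n) + wB n * (g+g+g+g+g+g) \<le> 3"
proof -
  have nz: "n*(n-1)*(n+2) > 0" using assms(1) by auto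
  have wBn: "wB n \<le> 0" using nz by (simp add: wB_def)
  have "wB n * (g+g+g+g+g+g) \<le> wB n * (6*n)" using wBn assms(2) by (intro mult_left_mono_neg) auto
  moreover have "wA n * (n*n + n*n + n*n) + wB n * (6*n) = 3"
  proof -
    have "wA n * (n*n + n*n + n*n) + wB n * (6*n) = (3*n*n*(n+1) - 6*n)/(n*(n-1)*(n+2))"
      by (simp add: wA_def wB_def diff_divide_distrib algebra_simps)
    also have "3*n*n*(n+1) - 6*n = 3 * (n*(n-1)*(n+2))" by (simp add: algebra_simps)
    also have "3 * (n*(n-1)*(n+2)) / (n*(n-1)*(n+2)) = 3" using nz by (intro nonzero_mult_div_cancel_right) linarith
    finally show ?thesis .
  qed
  ultimately show ?thesis by linarith
qed

context haar2 begin

lemma E2_dl: "cc = 1 / real CARD('n) \<Longrightarrow> E2 a b c d = dl a c * (dl b d * cc)"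
  by (simp add: E2_gen dl_def)

lemma int_p2: "integrable M (\<lambda>U. p2 (A ** U))"
  by (simp add: p2_exp int2)

lemma int_p2sq: "integrable M (\<lambda>U. (p2 (A ** U))^2)"
  by (simp add: sq_exp int4)

lemma Ef: "integral\<^sup>L M (\<lambda>U. p2 (A ** U)) = F A / real CARD('n)"
proof -
  define cc where "cc = 1 / real CARD('n)"
  note cc = cc_def
  have "integral\<^sup>L M (\<lambda>U. p2 (A ** U)) = (\<Sum>i\<in>UNIV. \<Sum>j\<in>UNIV. \<Sum>k\<in>UNIV. \<Sum>l\<in>UNIV. A$i$j * A$k$l * E2 j k l i)"
    by (simp add: p2_exp int2 E2_def)
  also have "\<dots> = (\<Sum>i\<in>UNIV. \<Sum>j\<in>UNIV. A$i$j * A$i$j * cc)"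
    by (simp add: E2_dl[OF cc] dl_def mult_if_r mult_if_l sum_if_out)
  also have "\<dots> = F A * cc" by (simp add: F_def sum_distrib_right)
  also have "\<dots> = F A / real CARD('n)" by (simp add: cc)
  finally show ?thesis .
qed

lemma Ef2': "integral\<^sup>L M (\<lambda>U. (p2 (A ** U))^2) = S8 A (Wg (real CARD('n)))"
  unfolding Ef2 S8_def ..

lemma var_bound:
  assumes "F A = real CARD('n)"
  shows "prob_space.variance M (\<lambda>U. p2 (A ** U)) \<le> 2"
proof -
  have v: "prob_space.variance M (\<lambda>U. p2 (A ** U)) = S8 A (Wg (real CARD('n))) - (F A / real CARD('n))^2"
    using prob_space.variance_eq[OF prob int_p2 int_p2sq] Ef Ef2' by simp
  have "S8 A (Wg (real CARD('n))) = wA (real CARD('n)) * (F A * F A + F A * F A + F A * F A)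
    + wB (real CARD('n)) * (GG A + GG A + GG A + GG A + GG A + GG A)"
    by (simp add: S8_Wg S11 S22 S33 S12 S13 S21 S23 S31 S32)
  also have "\<dots> \<le> 3"
  proof -
    have "GG A \<ge> real CARD('n)" using LB_GG[of A] assms ncard2 by (simp add: power2_eq_square)
    thus ?thesis unfolding assms by (intro final_arith ncard2)
  qed
  finally have "S8 A (Wg (real CARD('n))) \<le> 3" .
  moreover have "(F A / real CARD('n))^2 = 1" using assms ncard2 by simp
  ultimately show ?thesis using v by linarith
qed

end

theorem mainTheorem3:
  fixes A :: "real^'n^'n" and M :: "(real^'n^'n) measure"
  assumes "CARD('n) \<ge> 4"
    and "trace (A ** transpose A) = real CARD('n)"
    and "haar_orthogonal M"
  shows "prob_space.variance M (\<lambda>U. p2 (A ** U)) \<le> 2"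
proof -
  interpret haar2 M
    by unfold_locales (use assms in auto)
  have "F A = trace (A ** transpose A)"
    by (simp add: F_def trace_def matrix_matrix_mult_def transpose_def)
  thus ?thesis using var_bound assms(2) by simp
qed

end
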